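(* Let $\Phi$ be a channel matrix whose rows $P^1,\dots,P^4\in\Delta^n$ are in general position, let $Q^0$ be the equidistant point from $P^1,\dots,P^4$ and $\boldsymbol\lambda^0$ its barycentric coordinate. If $\lambda^0_i\ge0$ for $i=1,\dots,4$, then the output distribution achieving the channel capacity is $Q^\ast=Q^0$ and the channel capacity is $C=D(P^1\|Q^0)$.
   Context: $\Delta^n=\{Q:Q_j>0,\sum_jQ_j=1\}$, $\bar\Delta^m=\{\boldsymbol\lambda:\lambda_i\ge0,\sum_i\lambda_i=1\}$; $D(Q\|Q')=\sum_jQ_j\log(Q_j/Q'_j)$. Rows are in general position if $P^2-P^1,\dots,P^m-P^1$ are linearly independent. $L(S^1,\dots,S^r)=\{\sum_i\lambda_iS^i:\sum_i\lambda_i=1\}\cap\Delta^n$. The barycentric coordinate of $Q\in L(P^1,\dots,P^m)$ is the unique $\boldsymbol\lambda$ with $\sum_i\lambda_i=1$, $Q=\sum_i\lambda_iP^i$. The equidistant point is the unique $Q^0\in L(P^1,\dots,P^m)$ with all $D(P^i\|Q^0)$ equal. Mutual information $I(\boldsymbol\lambda,\Phi)=\sum_{i,j}\lambda_iP^i_j\log(P^i_j/Q_j)$ with $Q=\boldsymbol\lambda\Phi$; capacity $C=\max_{\boldsymbol\lambda\in\bar\Delta^m}I(\boldsymbol\lambda,\Phi)$; the capacity-achieving output distribution is $Q^\ast=\boldsymbol\lambda^\ast\Phi$ for a maximizer $\boldsymbol\lambda^\ast$ (unique). *)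

theory Defs
  imports "HOL-Analysis.Analysis"
begin

text \<open>Distributions on the output alphabet {0..<n} are functions nat => real;
 only the values at j < n matter. Rows of a channel matrix with m inputs are
 P i for i < m.\<close>

definition open_simplex :: "nat \<Rightarrow> (nat \<Rightarrow> real) \<Rightarrow> bool" where
  "open_simplex n Q \<longleftrightarrow> (\<forall>j<n. Q j > 0) \<and> (\<Sum>j<n. Q j) = 1"

definition closed_simplex :: "nat \<Rightarrow> (nat \<Rightarrow> real) set" where
  "closed_simplex m = {lam. (\<forall>i<m. lam i \<ge> 0) \<and> (\<Sum>i<m. lam i) = 1}"

definition KL :: "nat \<Rightarrow> (nat \<Rightarrow> real) \<Rightarrow> (nat \<Rightarrow> real) \<Rightarrow> real" where
  "KL n Q Q' = (\<Sum>j<n. Q j * ln (Q j / Q' j))"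

definition out_dist :: "nat \<Rightarrow> (nat \<Rightarrow> nat \<Rightarrow> real) \<Rightarrow> (nat \<Rightarrow> real) \<Rightarrow> (nat \<Rightarrow> real)" where
  "out_dist m P lam = (\<lambda>j. \<Sum>i<m. lam i * P i j)"

text \<open>P^2-P^1, ..., P^m-P^1 linearly independent (rows indexed 0..m-1).\<close>
definition general_position :: "nat \<Rightarrow> nat \<Rightarrow> (nat \<Rightarrow> nat \<Rightarrow> real) \<Rightarrow> bool" where
  "general_position n m P \<longleftrightarrow>
     (\<forall>c. (\<forall>j<n. (\<Sum>i\<in>{1..<m}. c i * (P i j - P 0 j)) = 0) \<longrightarrow> (\<forall>i\<in>{1..<m}. c i = 0))"

definition barycentric :: "nat \<Rightarrow> nat \<Rightarrow> (nat \<Rightarrow> nat \<Rightarrow> real) \<Rightarrow> (nat \<Rightarrow> real) \<Rightarrow> (nat \<Rightarrow> real) \<Rightarrow> bool" where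
  "barycentric n m P Q lam \<longleftrightarrow> (\<Sum>i<m. lam i) = 1 \<and> (\<forall>j<n. Q j = out_dist m P lam j)"

definition in_L :: "nat \<Rightarrow> nat \<Rightarrow> (nat \<Rightarrow> nat \<Rightarrow> real) \<Rightarrow> (nat \<Rightarrow> real) \<Rightarrow> bool" where
  "in_L n m P Q \<longleftrightarrow> open_simplex n Q \<and> (\<exists>lam. barycentric n m P Q lam)"

definition equidistant :: "nat \<Rightarrow> nat \<Rightarrow> (nat \<Rightarrow> nat \<Rightarrow> real) \<Rightarrow> (nat \<Rightarrow> real) \<Rightarrow> bool" where
  "equidistant n m P Q \<longleftrightarrow> in_L n m P Q \<and> (\<forall>i<m. KL n (P i) Q = KL n (P 0) Q)"

definition mutual_info :: "nat \<Rightarrow> nat \<Rightarrow> (nat \<Rightarrow> nat \<Rightarrow> real) \<Rightarrow> (nat \<Rightarrow> real) \<Rightarrow> real" where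
  "mutual_info n m P lam =
     (\<Sum>i<m. \<Sum>j<n. lam i * P i j * ln (P i j / out_dist m P lam j))"

definition capacity :: "nat \<Rightarrow> nat \<Rightarrow> (nat \<Rightarrow> nat \<Rightarrow> real) \<Rightarrow> real" where
  "capacity n m P = (SUP lam \<in> closed_simplex m. mutual_info n m P lam)"

end

theory Submission
  imports Defs
begin

lemma gibbs:
  fixes Q Q' :: "nat \<Rightarrow> real"
  assumes pQ: "\<forall>j<n. Q j > 0" and pQ': "\<forall>j<n. Q' j > 0"
    and sQ: "(\<Sum>j<n. Q j) = 1" and sQ': "(\<Sum>j<n. Q' j) = 1"
  shows "KL n Q Q' \<ge> 0" and "KL n Q Q' = 0 \<Longrightarrow> \<forall>j<n. Q j = Q' j"
proof -
  define g where "g j = Q j * ((Q' j / Q j - 1) - ln (Q' j / Q j))" for j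
  have gnn: "g j \<ge> 0" if "j < n" for j
  proof -
    have "ln (Q' j / Q j) \<le> Q' j / Q j - 1"
      using pQ pQ' that by (intro ln_le_minus_one) auto
    then show ?thesis unfolding g_def using pQ that by auto
  qed
  have geq: "g j = Q' j - Q j + Q j * ln (Q j / Q' j)" if "j < n" for j
  proof -
    have a: "Q j > 0" "Q' j > 0" using pQ pQ' that by auto
    show ?thesis unfolding g_def using a by (simp add: ln_div field_simps)
  qed
  have "(\<Sum>j<n. g j) = (\<Sum>j<n. Q' j - Q j + Q j * ln (Q j / Q' j))"
    using geq by simp
  also have "\<dots> = (\<Sum>j<n. Q' j) - (\<Sum>j<n. Q j) + KL n Q Q'"
    unfolding KL_def by (simp add: sum.distrib sum_subtractf)
  also have "\<dots> = KL n Q Q'" using sQ sQ' by simp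
  finally have KLg: "KL n Q Q' = (\<Sum>j<n. g j)" by simp
  show "KL n Q Q' \<ge> 0" unfolding KLg by (rule sum_nonneg) (simp add: gnn)
  show "\<forall>j<n. Q j = Q' j" if "KL n Q Q' = 0"
  proof (intro allI impI)
    fix j assume j: "j < n"
    have "\<forall>x\<in>{..<n}. g x = 0"
      using that KLg sum_nonneg_eq_0_iff[of "{..<n}" g] gnn by auto
    then have "g j = 0" using j by auto
    then have "ln (Q' j / Q j) = Q' j / Q j - 1"
      unfolding g_def using pQ j by auto
    then have "Q' j / Q j = 1"
      using pQ pQ' j by (intro ln_eq_minus_one) auto
    then show "Q j = Q' j" using pQ j by (simp add: field_simps)
  qed
qed

lemma out_pos:
  assumes rows: "\<forall>i<m. \<forall>j<n. P i j > 0"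
    and lam: "lam \<in> closed_simplex m" and j: "j < n"
  shows "out_dist m P lam j > 0"
proof -
  have nn: "\<forall>i<m. lam i \<ge> 0" and s: "(\<Sum>i<m. lam i) = 1"
    using lam unfolding closed_simplex_def by auto
  obtain i where i: "i < m" "lam i > 0"
  proof (rule ccontr)
    assume "\<not> thesis"
    with that have "\<forall>i<m. lam i \<le> 0" by force
    then have "(\<Sum>i<m. lam i) \<le> 0" by (intro sum_nonpos) auto
    with s show False by simp
  qed
  show ?thesis unfolding out_dist_def
  proof (rule sum_pos2[of _ i])
    show "0 < lam i * P i j" using i rows j by auto
    fix k assume "k \<in> {..<m}"
    then have "lam k \<ge> 0" "P k j > 0" using nn rows j by auto
    then show "0 \<le> lam k * P k j" by simp
  qed (use i in auto)
qed

lemma decomp: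
  assumes rows: "\<forall>i<m. \<forall>j<n. P i j > 0"
    and lam: "lam \<in> closed_simplex m"
    and pQ: "\<forall>j<n. Q j > 0"
  shows "mutual_info n m P lam
     = (\<Sum>i<m. lam i * KL n (P i) Q) - KL n (out_dist m P lam) Q"
proof -
  define R where "R = out_dist m P lam"
  have pR: "\<forall>j<n. R j > 0" using out_pos[OF rows lam] unfolding R_def by auto
  have R: "R j * f = (\<Sum>i<m. lam i * P i j * f)" for j f
    unfolding R_def out_dist_def by (simp add: sum_distrib_right)
  have "mutual_info n m P lam = (\<Sum>i<m. \<Sum>j<n. lam i * P i j * (ln (P i j) - ln (R j)))"
    unfolding mutual_info_def R_def[symmetric]
  proof (intro sum.cong refl)
    fix i j assume "i \<in> {..<m}" "j \<in> {..<n}"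
    then have a: "P i j > 0" "R j > 0" using rows pR by auto
    then show "lam i * P i j * ln (P i j / R j) = lam i * P i j * (ln (P i j) - ln (R j))"
      by (simp add: ln_div)
  qed
  moreover have "(\<Sum>i<m. lam i * KL n (P i) Q)
      = (\<Sum>i<m. \<Sum>j<n. lam i * P i j * (ln (P i j) - ln (Q j)))"
    unfolding KL_def sum_distrib_left
  proof (intro sum.cong refl)
    fix i j assume "i \<in> {..<m}" "j \<in> {..<n}"
    then have a: "P i j > 0" "Q j > 0" using rows pQ by auto
    then show "lam i * (P i j * ln (P i j / Q j)) = lam i * P i j * (ln (P i j) - ln (Q j))"
      by (simp add: ln_div)
  qed
  moreover have "KL n R Q = (\<Sum>j<n. \<Sum>i<m. lam i * P i j * (ln (R j) - ln (Q j)))"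
    unfolding KL_def
  proof (intro sum.cong refl)
    fix j assume "j \<in> {..<n}"
    then have a: "R j > 0" "Q j > 0" using pR pQ by auto
    have "R j * ln (R j / Q j) = R j * (ln (R j) - ln (Q j))" using a by (simp add: ln_div)
    also have "\<dots> = (\<Sum>i<m. lam i * P i j * (ln (R j) - ln (Q j)))" by (rule R)
    finally show "R j * ln (R j / Q j) = (\<Sum>i<m. lam i * P i j * (ln (R j) - ln (Q j)))" .
  qed
  moreover have "\<dots> = (\<Sum>i<m. \<Sum>j<n. lam i * P i j * (ln (R j) - ln (Q j)))"
    by (rule sum.swap)
  moreover have "(\<Sum>i<m. \<Sum>j<n. lam i * P i j * (ln (P i j) - ln (Q j)))
      - (\<Sum>i<m. \<Sum>j<n. lam i * P i j * (ln (R j) - ln (Q j)))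
      = (\<Sum>i<m. \<Sum>j<n. lam i * P i j * (ln (P i j) - ln (Q j))
            - lam i * P i j * (ln (R j) - ln (Q j)))"
    by (simp only: sum_subtractf[symmetric])
  moreover have "\<dots> = (\<Sum>i<m. \<Sum>j<n. lam i * P i j * (ln (P i j) - ln (R j)))"
    by (intro sum.cong refl) (simp add: algebra_simps)
  ultimately show ?thesis unfolding R_def[symmetric] by linarith
qed

lemma general:
  fixes n :: nat and P :: "nat \<Rightarrow> nat \<Rightarrow> real"
    and Q0 lam0 :: "nat \<Rightarrow> real" and m :: nat
  assumes m0: "0 < m" and rows: "\<forall>i<m. open_simplex n (P i)"
    and eq: "equidistant n m P Q0"
    and bary: "barycentric n m P Q0 lam0"
    and nonneg: "\<forall>i<m. lam0 i \<ge> 0"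
  shows "(\<exists>lam\<in>closed_simplex m. mutual_info n m P lam = capacity n m P)
       \<and> (\<forall>lam\<in>closed_simplex m. mutual_info n m P lam = capacity n m P
             \<longrightarrow> (\<forall>j<n. out_dist m P lam j = Q0 j))
       \<and> capacity n m P = KL n (P 0) Q0"
proof -
  define d where "d = KL n (P 0) Q0"
  have rp: "\<forall>i<m. \<forall>j<n. P i j > 0" using rows unfolding open_simplex_def by auto
  have Q0s: "open_simplex n Q0" using eq unfolding equidistant_def in_L_def by auto
  have pQ: "\<forall>j<n. Q0 j > 0" and sQ: "(\<Sum>j<n. Q0 j) = 1"
    using Q0s unfolding open_simplex_def by blast+
  have KLi: "\<forall>i<m. KL n (P i) Q0 = d" using eq unfolding equidistant_def d_def by blast
  have main: "mutual_info n m P lam = d - KL n (out_dist m P lam) Q0"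
    if lam: "lam \<in> closed_simplex m" for lam
  proof -
    have "(\<Sum>i<m. lam i * KL n (P i) Q0) = (\<Sum>i<m. lam i * d)"
      using KLi by (intro sum.cong) auto
    also have "\<dots> = (\<Sum>i<m. lam i) * d" by (rule sum_distrib_right[symmetric])
    also have "\<dots> = d" using lam unfolding closed_simplex_def by simp
    finally show ?thesis using decomp[OF rp lam pQ] by linarith
  qed
  have sR: "(\<Sum>j<n. out_dist m P lam j) = 1" if lam: "lam \<in> closed_simplex m" for lam
  proof -
    have "(\<Sum>j<n. out_dist m P lam j) = (\<Sum>i<m. lam i * (\<Sum>j<n. P i j))"
      unfolding out_dist_def sum_distrib_left by (rule sum.swap)
    also have "\<dots> = (\<Sum>i<m. lam i)"
      using rows by (intro sum.cong) (auto simp: open_simplex_def)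
    finally show ?thesis using lam unfolding closed_simplex_def by simp
  qed
  have KLnn: "KL n (out_dist m P lam) Q0 \<ge> 0" if lam: "lam \<in> closed_simplex m" for lam
    using gibbs(1)[OF _ pQ sR[OF lam] sQ] out_pos[OF rp lam] by auto
  have le: "mutual_info n m P lam \<le> d" if "lam \<in> closed_simplex m" for lam
    using main[OF that] KLnn[OF that] by simp
  have lam0: "lam0 \<in> closed_simplex m"
    using bary nonneg unfolding closed_simplex_def barycentric_def by auto
  have "KL n (out_dist m P lam0) Q0 = KL n Q0 Q0"
    unfolding KL_def using bary unfolding barycentric_def by (intro sum.cong) auto
  also have "\<dots> = 0" unfolding KL_def using pQ by (intro sum.neutral) auto
  finally have I0: "mutual_info n m P lam0 = d" using main[OF lam0] by simp
  have cap: "capacity n m P = d"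
    unfolding capacity_def
    by (rule cSup_eq_maximum) (use I0 lam0 le in auto)
  show ?thesis
  proof (intro conjI ballI impI allI)
    show "\<exists>lam\<in>closed_simplex m. mutual_info n m P lam = capacity n m P"
      using lam0 I0 cap by auto
  next
    fix lam j assume lam: "lam \<in> closed_simplex m"
      and mi: "mutual_info n m P lam = capacity n m P" and j: "j < n"
    have "KL n (out_dist m P lam) Q0 = 0" using main[OF lam] mi cap by simp
    then show "out_dist m P lam j = Q0 j"
      using gibbs(2)[OF _ pQ sR[OF lam] sQ] out_pos[OF rp lam] j by auto
  next
    show "capacity n m P = KL n (P 0) Q0" using cap d_def by simp
  qed
qed

theorem theorem17:
  fixes n :: nat and P :: "nat \<Rightarrow> nat \<Rightarrow> real"
    and Q0 lam0 :: "nat \<Rightarrow> real"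
  assumes rows: "\<forall>i<4. open_simplex n (P i)"
    and gp: "general_position n 4 P"
    and eq: "equidistant n 4 P Q0"
    and bary: "barycentric n 4 P Q0 lam0"
    and nonneg: "\<forall>i<4. lam0 i \<ge> 0"
  shows "(\<exists>lam\<in>closed_simplex 4. mutual_info n 4 P lam = capacity n 4 P)
       \<and> (\<forall>lam\<in>closed_simplex 4. mutual_info n 4 P lam = capacity n 4 P
             \<longrightarrow> (\<forall>j<n. out_dist 4 P lam j = Q0 j))
       \<and> capacity n 4 P = KL n (P 0) Q0"
  by (rule general[OF _ rows eq bary nonneg]) simp

end
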